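(* Fix an integer $L\ge 1$ and a real $r\in[0,\frac{L}{L+1})$. There exist an integer $N=N(r,L)$ and a function $g_{r,L}:\mathbb{N}\to[0,\infty)$ with $g_{r,L}(n)\to 0$ as $n\to\infty$ such that the following holds. For every integer $q\ge 2$ and every $n\ge N$ with $rn\in\mathbb{N}$, every $(r,L)$ list-decodable code $C\subseteq[q]^n$ satisfies $$|C|\le \max\{q(1+g_{r,L}(n)),\,L\}\cdot q^{\,n-(\lfloor\frac{L+1}{L}rn\rfloor+1)}.$$
   Context: $[q]=\{1,\dots,q\}$. A code of length $n$ over an alphabet of size $q$ is a subset $C\subseteq[q]^n$. The Hamming distance $d(x,y)$ of $x,y\in[q]^n$ is the number of coordinates where they differ, and $B_t(v)$ is the set of vectors of $[q]^n$ at Hamming distance at most $t$ from $v$. A code $C\subseteq[q]^n$ is $(r,L)$ list-decodable if $|B_{rn}(v)\cap C|\le L$ for every $v\in[q]^n$. *)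

theory Defs
  imports "HOL-Analysis.Analysis"
begin

text \<open>Vectors of [q]^n are represented as functions nat => nat, with coordinates
 0..n-1 taking values in {1..q} and value undefined (extensional) elsewhere.\<close>

definition qspace :: "nat \<Rightarrow> nat \<Rightarrow> (nat \<Rightarrow> nat) set" where
  "qspace q n = PiE {0..<n} (\<lambda>_. {1..q})"

definition hamming :: "nat \<Rightarrow> (nat \<Rightarrow> nat) \<Rightarrow> (nat \<Rightarrow> nat) \<Rightarrow> nat" where
  "hamming n x y = card {i \<in> {0..<n}. x i \<noteq> y i}"

definition hball :: "nat \<Rightarrow> nat \<Rightarrow> real \<Rightarrow> (nat \<Rightarrow> nat) \<Rightarrow> (nat \<Rightarrow> nat) set" where
  "hball q n t v = {x \<in> qspace q n. real (hamming n x v) \<le> t}"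

definition list_decodable :: "nat \<Rightarrow> nat \<Rightarrow> real \<Rightarrow> nat \<Rightarrow> (nat \<Rightarrow> nat) set \<Rightarrow> bool" where
  "list_decodable q n r L C \<longleftrightarrow> C \<subseteq> qspace q n \<and>
     (\<forall>v \<in> qspace q n. card (hball q n (r * real n) v \<inter> C) \<le> L)"

end

theory Submission
  imports Defs
begin

lemma card_filter_sum: "finite J \<Longrightarrow> card {j\<in>J. P j} = (\<Sum>j\<in>J. if P j then 1 else (0::nat))"
  by (simp add: sum.If_cases Int_def)

lemma distribute:
  fixes A :: "'a set" and I :: "'b set" and d :: "'b \<Rightarrow> nat"
  assumes "finite I" "finite A" "sum d I \<le> card A"
  shows "\<exists>f. \<forall>i\<in>I. d i \<le> card {a\<in>A. f a = i}"
  using assms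
proof (induction I arbitrary: A rule: finite_induct)
  case empty then show ?case by auto
next
  case (insert i I)
  have "d i \<le> card A" using insert by simp
  then obtain A' where A': "A' \<subseteq> A" "card A' = d i" "finite A'" by (meson obtain_subset_with_card_n)
  have "card (A - A') = card A - d i" using A' insert.prems by (simp add: card_Diff_subset)
  hence "sum d I \<le> card (A - A')" using insert by simp
  then obtain f where f: "\<forall>i\<in>I. d i \<le> card {a\<in>A-A'. f a = i}" using insert.IH[of "A - A'"] insert.prems by auto
  define g where "g a = (if a \<in> A' then i else f a)" for a
  show ?case
  proof (intro exI ballI)
    fix i' assume "i' \<in> insert i I"
    then consider "i' = i" | "i' \<in> I" "i' \<noteq> i" by auto
    then show "d i' \<le> card {a\<in>A. g a = i'}"
    proof cases
      case 1
      have "A' \<subseteq> {a\<in>A. g a = i'}" using A' 1 by (auto simp: g_def)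
      then show ?thesis using A' insert.prems card_mono[of "{a\<in>A. g a = i'}" A'] 1 by simp
    next
      case 2
      have "{a\<in>A-A'. f a = i'} \<subseteq> {a\<in>A. g a = i'}" by (auto simp: g_def)
      then have "card {a\<in>A-A'. f a = i'} \<le> card {a\<in>A. g a = i'}" using insert.prems by (intro card_mono) auto
      then show ?thesis using f 2 by force
    qed
  qed
qed

definition deg :: "nat \<Rightarrow> (nat\<Rightarrow>nat) set \<Rightarrow> (nat\<Rightarrow>nat) \<Rightarrow> nat" where
  "deg M F x = card {j\<in>{0..<M}. \<exists>z\<in>F. z \<noteq> x \<and> z j = x j}"

definition Tsum :: "nat \<Rightarrow> (nat\<Rightarrow>nat) set \<Rightarrow> nat" where
  "Tsum M F = (\<Sum>j\<in>{0..<M}. card F - card ((\<lambda>x. x j) ` F))"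

lemma Tsum_step:
  assumes "finite F" "x \<in> F"
  shows "Tsum M F \<le> Tsum M (F - {x}) + deg M F x"
proof -
  define P where "P = {j\<in>{0..<M}. \<exists>z\<in>F. z \<noteq> x \<and> z j = x j}"
  have cF: "card F = card (F - {x}) + 1" using assms card_gt_0_iff[of F] by auto
  have per: "card F - card ((\<lambda>x. x j) ` F) \<le> (card (F-{x}) - card ((\<lambda>x. x j) ` (F-{x}))) + (if j \<in> P then 1 else 0)"
    if "j \<in> {0..<M}" for j
  proof -
    have img: "(\<lambda>x. x j) ` F = insert (x j) ((\<lambda>x. x j) ` (F-{x}))" using assms by auto
    have le: "card ((\<lambda>x. x j) ` (F-{x})) \<le> card (F-{x})" by (rule card_image_le) (use assms in simp)
    show ?thesis
    proof (cases "j \<in> P")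
      case True
      then obtain z where "z \<in> F" "z \<noteq> x" "z j = x j" unfolding P_def by auto
      then have "x j \<in> (\<lambda>x. x j) ` (F-{x})" by (metis (no_types, lifting) DiffI image_eqI singletonD)
      then have "(\<lambda>x. x j) ` F = (\<lambda>x. x j) ` (F-{x})" using img by auto
      then show ?thesis using cF le True by simp
    next
      case False
      then have "x j \<notin> (\<lambda>x. x j) ` (F-{x})" unfolding P_def using that by force
      then have "card ((\<lambda>x. x j) ` F) = card ((\<lambda>x. x j) ` (F-{x})) + 1" using img assms by simp
      then show ?thesis using cF le False by simp
    qed
  qed
  have "Tsum M F \<le> (\<Sum>j\<in>{0..<M}. (card (F-{x}) - card ((\<lambda>x. x j) ` (F-{x}))) + (if j \<in> P then 1 else 0))"
    unfolding Tsum_def by (rule sum_mono) (rule per)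
  also have "\<dots> = Tsum M (F - {x}) + (\<Sum>j\<in>{0..<M}. if j \<in> P then 1 else 0)"
    unfolding Tsum_def by (simp add: sum.distrib)
  also have "(\<Sum>j\<in>{0..<M}. if j \<in> P then 1 else 0) = card P"
    using card_filter_sum[of "{0..<M}" "\<lambda>j. j \<in> P"] unfolding P_def by simp
  finally show ?thesis unfolding deg_def P_def by simp
qed

lemma degen:
  assumes "finite F"
  shows "(\<exists>F'\<subseteq>F. F' \<noteq> {} \<and> (\<forall>x\<in>F'. L \<le> deg M F' x)) \<or> Tsum M F \<le> (L-1) * card F"
  using assms
proof (induction "card F" arbitrary: F rule: less_induct)
  case less
  show ?case
  proof (cases "F = {}")
    case True then show ?thesis by (simp add: Tsum_def)
  next
    case Fne: False
    show ?thesis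
    proof (cases "\<forall>x\<in>F. L \<le> deg M F x")
      case True then show ?thesis using Fne by blast
    next
      case False
      then obtain x where x: "x \<in> F" "deg M F x < L" by auto
      have "card (F - {x}) < card F" using x less.prems card_gt_0_iff[of F] by auto
      from less.hyps[OF this] less.prems
      have IH: "(\<exists>F'\<subseteq>F-{x}. F' \<noteq> {} \<and> (\<forall>x\<in>F'. L \<le> deg M F' x)) \<or> Tsum M (F-{x}) \<le> (L-1) * card (F-{x})"
        by simp
      show ?thesis
      proof (cases "\<exists>F'\<subseteq>F-{x}. F' \<noteq> {} \<and> (\<forall>x\<in>F'. L \<le> deg M F' x)")
        case True then show ?thesis by blast
      next
        case False
        with IH have T: "Tsum M (F-{x}) \<le> (L-1) * card (F-{x})" by simp
        have cF: "card F = card (F - {x}) + 1" using x less.prems card_gt_0_iff[of F] by auto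
        have "Tsum M F \<le> Tsum M (F - {x}) + deg M F x" by (rule Tsum_step) (use less.prems x in auto)
        also have "\<dots> \<le> (L-1) * card (F-{x}) + (L-1)" using T x by simp
        also have "\<dots> = (L-1) * card F" using cF by (simp add: algebra_simps)
        finally show ?thesis by simp
      qed
    qed
  qed
qed

lemma greedy:
  assumes "F' \<noteq> {}" "\<forall>x\<in>F'. L \<le> deg M F' x" "k \<le> L"
  shows "\<exists>S J. S \<subseteq> F' \<and> S \<noteq> {} \<and> finite S \<and> card S \<le> k+1 \<and> J \<subseteq> {0..<M} \<and> card J = k \<and>
     (\<forall>j\<in>J. \<exists>y\<in>S. \<exists>z\<in>S. y \<noteq> z \<and> y j = z j)"
  using assms(3)
proof (induction k)
  case 0
  obtain x where "x \<in> F'" using assms by auto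
  then show ?case by (intro exI[of _ "{x}"] exI[of _ "{}"]) auto
next
  case (Suc k)
  then obtain S J where SJ: "S \<subseteq> F'" "S \<noteq> {}" "finite S" "card S \<le> k+1" "J \<subseteq> {0..<M}" "card J = k"
    "\<forall>j\<in>J. \<exists>y\<in>S. \<exists>z\<in>S. y \<noteq> z \<and> y j = z j" by auto
  obtain y where y: "y \<in> S" using SJ by auto
  define P where "P = {j\<in>{0..<M}. \<exists>z\<in>F'. z \<noteq> y \<and> z j = y j}"
  have "L \<le> card P" using assms(2) y SJ unfolding P_def deg_def by auto
  have fJ: "finite J" using SJ finite_subset by blast
  have "\<not> P \<subseteq> J"
  proof
    assume "P \<subseteq> J"
    then have "card P \<le> card J" using fJ by (rule card_mono[rotated])
    then show False using \<open>L \<le> card P\<close> SJ Suc.prems by simp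
  qed
  then obtain j where j: "j \<in> P" "j \<notin> J" by auto
  then obtain z where z: "z \<in> F'" "z \<noteq> y" "z j = y j" "j < M" unfolding P_def by auto
  show ?case
  proof (intro exI[of _ "insert z S"] exI[of _ "insert j J"] conjI)
    show "card (insert z S) \<le> Suc k + 1" using SJ card_insert_le_m1 by (simp add: card_insert_if)
    show "card (insert j J) = Suc k" using fJ j SJ by simp
    show "\<forall>i\<in>insert j J. \<exists>y\<in>insert z S. \<exists>z'\<in>insert z S. y \<noteq> z' \<and> y i = z' i"
      using SJ z y by blast
  qed (use SJ z in auto)
qed

lemma extend_set:
  assumes "finite D" "S0 \<subseteq> D" "card S0 \<le> k" "k \<le> card D"
  shows "\<exists>S. S0 \<subseteq> S \<and> S \<subseteq> D \<and> card S = k"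
proof -
  have f0: "finite S0" using assms finite_subset by blast
  have "card (D - S0) = card D - card S0" using assms f0 by (simp add: card_Diff_subset)
  then have "k - card S0 \<le> card (D - S0)" using assms by simp
  then obtain X where X: "X \<subseteq> D - S0" "card X = k - card S0" "finite X" by (meson obtain_subset_with_card_n)
  have "card (S0 \<union> X) = card S0 + card X" using X f0 by (subst card_Un_disjoint) auto
  then show ?thesis using X assms by (intro exI[of _ "S0 \<union> X"]) auto
qed

lemma center:
  assumes S: "S \<subseteq> qspace q n" "finite S" "card S = L+1"
    and J: "J \<subseteq> {0..<M}" "card J = L" "\<forall>j\<in>J. \<exists>y\<in>S. \<exists>z\<in>S. y \<noteq> z \<and> y j = z j"
    and agree: "\<forall>x\<in>S. \<forall>y\<in>S. \<forall>i\<in>{M..<n}. x i = y i"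
    and Mn: "M \<le> n" and h1: "L*(M-1) \<le> (L+1)*t" and h2: "(L+1)*t < L*M" and sL: "L \<le> M - t"
  shows "\<exists>v\<in>qspace q n. \<forall>w\<in>S. hamming n w v \<le> t"
proof -
  obtain Y Z where YZ: "\<forall>j\<in>J. Y j \<in> S \<and> Z j \<in> S \<and> Y j \<noteq> Z j \<and> Y j j = Z j j"
    using J(3) by metis
  have fJ: "finite J" using J(1) finite_subset by blast
  have tM: "t < M" using h2 by (metis le_less_trans less_imp_le_nat mult_less_cancel1 mult_le_mono1 le_add2 add.commute)
  define sv where "sv = M - t"
  define a where "a w = card {j\<in>J. w j = Y j j}" for w
  define A where "A = {0..<M} - J"
  have cA: "card A = M - L" unfolding A_def using J fJ by (simp add: card_Diff_subset)
  have a_le: "a w \<le> L" for w unfolding a_def using J(2) fJ by (metis (no_types, lifting) card_mono mem_Collect_eq subsetI)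
  have sum_a: "2*L \<le> (\<Sum>w\<in>S. a w)"
  proof -
    have "(\<Sum>w\<in>S. a w) = (\<Sum>w\<in>S. \<Sum>j\<in>J. if w j = Y j j then 1 else 0)"
      unfolding a_def using fJ by (simp add: card_filter_sum)
    also have "\<dots> = (\<Sum>j\<in>J. \<Sum>w\<in>S. if w j = Y j j then 1 else 0)" by (rule sum.swap)
    also have "\<dots> = (\<Sum>j\<in>J. card {w\<in>S. w j = Y j j})" using S by (simp add: card_filter_sum)
    also have "\<dots> \<ge> (\<Sum>j\<in>J. 2)"
    proof (rule sum_mono)
      fix j assume "j \<in> J"
      then have "{Y j, Z j} \<subseteq> {w\<in>S. w j = Y j j}" "card {Y j, Z j} = 2" using YZ by auto
      then show "2 \<le> card {w\<in>S. w j = Y j j}" using S by (metis (no_types, lifting) card_mono finite_subset mem_Collect_eq subsetI)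
    qed
    finally show ?thesis using J(2) by simp
  qed
  have sumsa: "(\<Sum>w\<in>S. sv - a w) + (\<Sum>w\<in>S. a w) = (L+1) * sv"
  proof -
    have "(\<Sum>w\<in>S. sv - a w) + (\<Sum>w\<in>S. a w) = (\<Sum>w\<in>S. (sv - a w) + a w)" by (simp add: sum.distrib)
    also have "\<dots> = (\<Sum>w\<in>S. sv)" using a_le sL unfolding sv_def by (intro sum.cong) (auto, metis le_add_diff_inverse2 le_trans diff_diff_left)
    finally show ?thesis using S by simp
  qed
  have key: "(L+1) * sv \<le> M + L"
  proof -
    have "sv + t = M" using tM sv_def by simp
    then have "(L+1) * sv + (L+1)*t = (L+1)*M" by (metis add_mult_distrib2)
    moreover have "L*(M-1) + L = L*M" using h2 by (cases M) (auto simp: algebra_simps)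
    ultimately show ?thesis using h1 by (simp add: algebra_simps)
  qed
  have "(\<Sum>w\<in>S. sv - a w) \<le> card A" using sumsa sum_a key cA by linarith
  then obtain f where f: "\<forall>w\<in>S. sv - a w \<le> card {j\<in>A. f j = w}"
    using distribute[of S A "\<lambda>w. sv - a w"] S unfolding A_def by auto
  obtain p0 where p0: "p0 \<in> S" using S by fastforce
  define v where "v j = (if j < n then (if j \<in> J then Y j j else if j < M then (if f j \<in> S then f j j else p0 j) else p0 j) else undefined)" for j
  have Sq: "w j \<in> {1..q}" if "w \<in> S" "j < n" for w j
    using S(1) that unfolding qspace_def by (auto simp: PiE_iff)
  have v1: "\<forall>j\<in>{0..<n}. v j \<in> {1..q}"
  proof
    fix j assume "j \<in> {0..<n}"
    then show "v j \<in> {1..q}" unfolding v_def using Sq YZ p0 by auto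
  qed
  have v2: "v \<in> extensional {0..<n}" unfolding extensional_def v_def by auto
  have vq: "v \<in> qspace q n" unfolding qspace_def PiE_iff using v1 v2 by blast
  show ?thesis
  proof (intro bexI[OF _ vq] ballI)
    fix w assume w: "w \<in> S"
    have sub: "{i\<in>{0..<n}. w i \<noteq> v i} \<subseteq> {0..<M} - ({j\<in>J. w j = Y j j} \<union> {j\<in>A. f j = w})"
    proof
      fix i assume i: "i \<in> {i\<in>{0..<n}. w i \<noteq> v i}"
      have iM: "i < M"
      proof (rule ccontr)
        assume "\<not> i < M"
        then have "i \<notin> J" "v i = p0 i" using J(1) i unfolding v_def by auto
        moreover have "w i = p0 i" using agree w p0 i \<open>\<not> i < M\<close> by auto
        ultimately show False using i by simp
      qed
      moreover have "\<not> (i \<in> J \<and> w i = Y i i)" using i unfolding v_def by auto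
      moreover have "\<not> (i \<in> A \<and> f i = w)" using i w iM unfolding v_def A_def by auto
      ultimately show "i \<in> {0..<M} - ({j\<in>J. w j = Y j j} \<union> {j\<in>A. f j = w})" by auto
    qed
    have fA: "finite A" unfolding A_def by simp
    have disj: "card ({j\<in>J. w j = Y j j} \<union> {j\<in>A. f j = w}) = a w + card {j\<in>A. f j = w}"
      unfolding a_def by (rule card_Un_disjoint) (use fJ fA A_def in auto)
    have sub2: "{j\<in>J. w j = Y j j} \<union> {j\<in>A. f j = w} \<subseteq> {0..<M}" using J(1) A_def by auto
    have "hamming n w v \<le> card ({0..<M} - ({j\<in>J. w j = Y j j} \<union> {j\<in>A. f j = w}))"
      unfolding hamming_def by (rule card_mono[OF _ sub]) simp
    also have "\<dots> = M - (a w + card {j\<in>A. f j = w})"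
      using sub2 disj card_Diff_subset[OF finite_subset[OF sub2] sub2] by simp
    also have "\<dots> \<le> t" using f w unfolding sv_def by force
    finally show "hamming n w v \<le> t" .
  qed
qed

lemma finite_qspace: "finite (qspace q n)" unfolding qspace_def by (simp add: finite_PiE)

lemma key:
  assumes C: "C \<subseteq> qspace q n" and LD: "\<forall>v\<in>qspace q n. card (hball q n (real t) v \<inter> C) \<le> L"
    and D: "D \<subseteq> C" "\<forall>x\<in>D. \<forall>y\<in>D. \<forall>i\<in>{M..<n}. x i = y i"
    and Mn: "M \<le> n" and h1: "L*(M-1) \<le> (L+1)*t" and h2: "(L+1)*t < L*M" and sL: "L \<le> M - t"
    and big: "L+1 \<le> card D"
  shows "M * card D \<le> (L-1) * card D + M*q"
proof -
  have fC: "finite C" using C finite_qspace finite_subset by blast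
  have fD: "finite D" using D fC finite_subset by blast
  from degen[OF fD, of L M] show ?thesis
  proof
    assume "\<exists>F'\<subseteq>D. F' \<noteq> {} \<and> (\<forall>x\<in>F'. L \<le> deg M F' x)"
    then obtain F' where F': "F' \<subseteq> D" "F' \<noteq> {}" "\<forall>x\<in>F'. L \<le> deg M F' x" by blast
    obtain S0 J where SJ: "S0 \<subseteq> F'" "S0 \<noteq> {}" "finite S0" "card S0 \<le> L+1" "J \<subseteq> {0..<M}" "card J = L"
      "\<forall>j\<in>J. \<exists>y\<in>S0. \<exists>z\<in>S0. y \<noteq> z \<and> y j = z j"
      using greedy[OF F'(2,3), of L] by auto
    obtain S where S: "S0 \<subseteq> S" "S \<subseteq> D" "card S = L+1"
      using extend_set[OF fD, of S0 "L+1"] SJ(1,4) F'(1) big by blast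
    have fS: "finite S" using S fD finite_subset by blast
    have Sq: "S \<subseteq> qspace q n" using S D C by blast
    have "\<forall>j\<in>J. \<exists>y\<in>S. \<exists>z\<in>S. y \<noteq> z \<and> y j = z j" using SJ(7) S(1) by (meson subsetD)
    moreover have "\<forall>x\<in>S. \<forall>y\<in>S. \<forall>i\<in>{M..<n}. x i = y i" using D S by blast
    ultimately obtain v where v: "v \<in> qspace q n" "\<forall>w\<in>S. hamming n w v \<le> t"
      using center[OF Sq fS S(3) SJ(5,6) _ _ Mn h1 h2 sL] by blast
    have "S \<subseteq> hball q n (real t) v \<inter> C" using v Sq S D unfolding hball_def by auto
    then have "card S \<le> card (hball q n (real t) v \<inter> C)" using fC by (intro card_mono) auto
    then show ?thesis using LD v S by fastforce
  next
    assume T: "Tsum M D \<le> (L-1) * card D"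
    have "(\<Sum>j\<in>{0..<M}. card D - q) \<le> Tsum M D"
      unfolding Tsum_def
    proof (rule sum_mono)
      fix j assume j: "j \<in> {0..<M}"
      have "(\<lambda>x. x j) ` D \<subseteq> {1..q}" using D C j Mn unfolding qspace_def by (auto simp: PiE_iff)
      then have "card ((\<lambda>x. x j) ` D) \<le> q" using card_mono[of "{1..q}"] by fastforce
      then show "card D - q \<le> card D - card ((\<lambda>x. x j) ` D)" by simp
    qed
    then have "M * (card D - q) \<le> (L-1) * card D" using T by simp
    moreover have "M * card D \<le> M * (card D - q) + M * q"
      by (metis add_mult_distrib2 le_add_diff_inverse2 mult_le_mono2 nat_le_linear diff_is_0_eq' add_0 le_add2 order_refl)
    ultimately show ?thesis by linarith
  qed
qed

lemma real_bound:
  fixes K M q c x :: real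
  assumes h: "M*K \<le> c*K + M*q" and "2*c \<le> M" "0 < x" "x \<le> M" "0 \<le> c" "0 \<le> K" "0 \<le> q"
  shows "K \<le> q*(1 + 2*c/x)"
proof -
  have M0: "0 < M" using assms by linarith
  have "2*c*K \<le> M*K" using assms by (intro mult_right_mono) auto
  then have "M*K \<le> 2*M*q" using h by linarith
  then have K2: "K \<le> 2*q" using M0 by (metis mult.assoc mult.commute mult_le_cancel_left_pos)
  have "c*K \<le> c*(2*q)" using K2 assms by (intro mult_left_mono) auto
  then have "M*K \<le> M*(q + 2*c*q/M)" using h M0 by (simp add: algebra_simps)
  then have "K \<le> q + 2*c*q/M" using M0 by simp
  also have "2*c*q/M \<le> 2*c*q/x" using assms by (intro divide_left_mono) auto
  finally show ?thesis by (simp add: algebra_simps)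
qed

lemma card_qspace: "card (qspace q n) = q^n"
  unfolding qspace_def by (simp add: card_PiE)

theorem theorem3p1:
  fixes L :: nat and r :: real
  assumes "L \<ge> 1" and "0 \<le> r" and "r < real L / (real L + 1)"
  shows "\<exists>(N::nat) (g::nat \<Rightarrow> real). (\<forall>n. g n \<ge> 0) \<and> g \<longlonglongrightarrow> 0 \<and>
    (\<forall>(q::nat) (n::nat) C. q \<ge> 2 \<longrightarrow> n \<ge> N \<longrightarrow> (\<exists>t::nat. r * real n = real t) \<longrightarrow>
       list_decodable q n r L C \<longrightarrow>
       real (card C) \<le> max (real q * (1 + g n)) (real L) *
         (real q) powi (int n - (\<lfloor>(real L + 1) / real L * r * real n\<rfloor> + 1)))"
proof -
  define a where "a = (real L + 1) / real L * r"
  define g where "g n = 2 * (real L - 1) / (a * real n)" for n :: nat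
  define N where "N = nat \<lceil>real (L*(L+1)) / a\<rceil> + 1"
  have L1: "real L \<ge> 1" using assms by simp
  have a0: "a \<ge> 0" unfolding a_def using assms by simp
  have a1: "a < 1"
  proof -
    have "(real L + 1) * r < real L" using assms(3) by (simp add: field_simps)
    then show ?thesis unfolding a_def using L1 by (simp add: field_simps)
  qed
  have gpos: "\<forall>n. g n \<ge> 0" unfolding g_def using a0 L1 by simp
  have glim: "g \<longlonglongrightarrow> 0"
  proof -
    have "g = (\<lambda>n. (2 * (real L - 1) / a) * (1 / real n))" unfolding g_def by (auto simp: fun_eq_iff)
    moreover have "(\<lambda>n. (2 * (real L - 1) / a) * (1 / real n)) \<longlonglongrightarrow> 0"
      by (rule tendsto_mult_right_zero) (rule lim_inverse_n')
    ultimately show ?thesis by simp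
  qed
  have main: "real (card C) \<le> max (real q * (1 + g n)) (real L) *
         (real q) powi (int n - (\<lfloor>(real L + 1) / real L * r * real n\<rfloor> + 1))"
    if q2: "q \<ge> 2" and nN: "n \<ge> N" and tt: "r * real n = real t" and LDC: "list_decodable q n r L C" for q n t C
  proof -
    define B where "B = max (real q * (1 + g n)) (real L)"
    have Bq: "B \<ge> real q" unfolding B_def using gpos[rule_format, of n] q2
      by (metis le_add_same_cancel1 max.coboundedI1 mult_left_mono mult.right_neutral of_nat_0_le_iff)
    have n1: "n \<ge> 1" using nN N_def by simp
    have Cq: "C \<subseteq> qspace q n" using LDC unfolding list_decodable_def by simp
    have fC: "finite C" using Cq finite_qspace finite_subset by blast
    have LD: "\<forall>v\<in>qspace q n. card (hball q n (real t) v \<inter> C) \<le> L"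
      using LDC tt unfolding list_decodable_def by simp
    have eq: "(real L + 1) / real L * r * real n = a * real n" unfolding a_def by simp
    show ?thesis
    proof (cases "r = 0")
      case True
      then have "a = 0" unfolding a_def by simp
      then have ex: "int n - (\<lfloor>(real L + 1) / real L * r * real n\<rfloor> + 1) = int (n - 1)" using True n1 by simp
      have "card C \<le> q^n" using card_mono[OF finite_qspace Cq] card_qspace by metis
      then have "real (card C) \<le> real q * real q ^ (n-1)" using n1
        by (metis One_nat_def Suc_pred le_add_diff_inverse2 le_numeral_extra(4) less_eq_Suc_le of_nat_le_iff of_nat_power power_Suc zero_less_one)
      also have "\<dots> \<le> B * real q ^ (n-1)" using Bq by (intro mult_right_mono) auto
      finally show ?thesis unfolding ex B_def power_int_of_nat .
    next
      case False
      then have apos: "a > 0" unfolding a_def using assms L1 by simp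
      define fl where "fl = \<lfloor>a * real n\<rfloor>"
      have fl0: "fl \<ge> 0" unfolding fl_def using apos by simp
      define m where "m = nat fl"
      define M where "M = m + 1"
      have mle: "real m \<le> a * real n" and mgt: "a * real n < real m + 1"
        unfolding m_def fl_def using fl0 fl_def by linarith+
      have Lpos: "real L > 0" using L1 by simp
      have aL: "real L * a = (real L + 1) * r" unfolding a_def using Lpos by simp
      have Lan: "real L * (a * real n) = real ((L+1)*t)"
      proof -
        have "real L * (a * real n) = (real L * a) * real n" by simp
        also have "\<dots> = (real L + 1) * (r * real n)" using aL by simp
        also have "\<dots> = real ((L+1)*t)" using tt by (simp add: algebra_simps)
        finally show ?thesis .
      qed
      have h1: "L*(M-1) \<le> (L+1)*t"
      proof -
        have "real L * real m \<le> real L * (a * real n)" using mle Lpos by simp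
        also have "\<dots> = real ((L+1)*t)" using Lan by simp
        finally show ?thesis unfolding M_def by (simp del: of_nat_mult add: of_nat_mult[symmetric])
      qed
      have h2: "(L+1)*t < L*M"
      proof -
        have "real ((L+1)*t) = real L * (a * real n)" using Lan by simp
        also have "\<dots> < real L * (real m + 1)" using mgt Lpos by simp
        also have "\<dots> = real (L*M)" unfolding M_def by (simp add: algebra_simps)
        finally show ?thesis by (simp only: of_nat_less_iff)
      qed
      have Mn: "M \<le> n"
      proof -
        have "a * real n < real n" using a1 n1 by simp
        then have "real m < real n" using mle by linarith
        then show ?thesis unfolding M_def by simp
      qed
      have bigM: "L*(L+1) \<le> M"
      proof -
        have "real (L*(L+1)) / a \<le> real N" unfolding N_def by linarith
        then have "real (L*(L+1)) \<le> a * real N" using apos by (simp add: field_simps)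
        also have "\<dots> \<le> a * real n" using nN apos by simp
        also have "\<dots> < real M" using mgt M_def by simp
        finally have "real (L*(L+1)) < real M" .
        then show ?thesis by (simp only: of_nat_less_iff)
      qed
      have tM: "t < M" using h2 by (metis le_less_trans less_imp_le_nat mult_less_cancel1 mult_le_mono1 le_add2 add.commute)
      have sL: "L \<le> M - t"
      proof (rule ccontr)
        assume "\<not> L \<le> M - t"
        then have "M < L + t" using tM by linarith
        then have "(L+1)*M < (L+1)*(L+t)" by (intro mult_strict_left_mono) auto
        then have "(L+1)*M < (L+1)*L + (L+1)*t" by (simp add: algebra_simps)
        then have "L*M + M < (L+1)*L + L*M" using h2 by (simp add: algebra_simps)
        then show False using bigM by (simp add: algebra_simps)
      qed
      define \<pi> where "\<pi> x = restrict x {M..<n}" for x :: "nat \<Rightarrow> nat"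
      define P where "P = \<pi> ` C"
      define Dp where "Dp p = {x\<in>C. \<pi> x = p}" for p
      have fP: "finite P" unfolding P_def using fC by simp
      have Cun: "C = (\<Union>p\<in>P. Dp p)" unfolding P_def Dp_def by auto
      have cardC: "card C = (\<Sum>p\<in>P. card (Dp p))"
        unfolding Cun by (rule card_UN_disjoint) (use fP fC in \<open>auto simp: Dp_def\<close>)
      have grp: "real (card (Dp p)) \<le> B" if "p \<in> P" for p
      proof (cases "card (Dp p) \<le> L")
        case True then show ?thesis unfolding B_def by simp
      next
        case False
        have DpC: "Dp p \<subseteq> C" unfolding Dp_def by auto
        have agr: "\<forall>x\<in>Dp p. \<forall>y\<in>Dp p. \<forall>i\<in>{M..<n}. x i = y i"
        proof (intro ballI)
          fix x y i assume "x \<in> Dp p" "y \<in> Dp p" and i: "i \<in> {M..<n}"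
          then have "restrict x {M..<n} i = restrict y {M..<n} i" unfolding Dp_def \<pi>_def by simp
          then show "x i = y i" using i by simp
        qed
        have nat: "M * card (Dp p) \<le> (L-1) * card (Dp p) + M*q"
          using key[OF Cq LD DpC agr Mn h1 h2 sL] False by simp
        have r1: "real M * real (card (Dp p)) \<le> real (L-1) * real (card (Dp p)) + real M * real q"
          using nat by (simp del: of_nat_mult of_nat_add add: of_nat_mult[symmetric] of_nat_add[symmetric])
        have "L \<le> L*L" using assms(1) by simp
        moreover have "L*(L+1) = L*L + L" by (simp add: algebra_simps)
        ultimately have "2*(L-1) \<le> M" using bigM by linarith
        then have "real (2*(L-1)) \<le> real M" by (simp only: of_nat_le_iff)
        then have "2 * real (L-1) \<le> real M" by simp
        moreover have "0 < a * real n" using apos n1 by simp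
        moreover have "a * real n \<le> real M" using mgt M_def by simp
        ultimately have "real (card (Dp p)) \<le> real q * (1 + 2 * real (L-1) / (a * real n))"
          using real_bound[OF r1] by simp
        also have "\<dots> = real q * (1 + g n)" unfolding g_def using L1 by (simp add: of_nat_diff)
        finally show ?thesis unfolding B_def by simp
      qed
      have "real (card C) = (\<Sum>p\<in>P. real (card (Dp p)))" using cardC by simp
      also have "\<dots> \<le> real (card P) * B" using grp sum_bounded_above[of P "\<lambda>p. real (card (Dp p))" B] by simp
      also have "card P \<le> q^(n-M)"
      proof -
        have "P \<subseteq> PiE {M..<n} (\<lambda>_. {1..q})"
          unfolding P_def \<pi>_def using Cq unfolding qspace_def by (auto simp: PiE_iff)
        then have "card P \<le> card (PiE {M..<n} (\<lambda>_. {1..q}))" by (intro card_mono) (auto simp: finite_PiE)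
        also have "\<dots> = q^(n-M)" by (simp add: card_PiE)
        finally show ?thesis .
      qed
      then have "real (card P) * B \<le> real q ^ (n-M) * B" using Bq q2
        by (intro mult_right_mono) (auto simp del: of_nat_power simp add: of_nat_power[symmetric])
      finally have fin: "real (card C) \<le> B * real q ^ (n-M)" by (simp add: mult.commute)
      have ex: "int n - (\<lfloor>(real L + 1) / real L * r * real n\<rfloor> + 1) = int (n - M)"
        using eq fl_def m_def M_def fl0 Mn by simp
      show ?thesis unfolding ex power_int_of_nat B_def[symmetric] by (rule fin)
    qed
  qed
  show ?thesis
    by (intro exI[of _ N] exI[of _ g] conjI gpos glim allI impI) (use main in blast)
qed

end
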